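(* Let $R>0$, $X=\{x\in\mathbb{R}^n:\|x\|_\infty\le R\}$ and $\mathcal{X}=X^m\subset\mathbb{R}^{m\times n}$ (the $m\times n$ matrices all of whose rows lie in $X$, equivalently all of whose entries lie in $[-R,R]$), and let $\Pi_{\mathcal{X}}$ be the Euclidean projection onto $\mathcal{X}$. Let $J=\frac1m\mathbf{1}\mathbf{1}^\top\in\mathbb{R}^{m\times m}$. Then for every $x\in\mathbb{R}^{m\times n}$, \[ \|(I-J)\Pi_{\mathcal{X}}(x)\|\leq\|(I-J)x\|, \] where $\|\cdot\|$ is the Frobenius norm. *)

theory Defs
  imports "HOL-Analysis.Analysis"
begin

text \<open>m x n real matrices are represented as real^'n^'m (rows indexed by 'm).
  The norm on this type is the Euclidean norm of all entries, i.e. the Frobenius norm.\<close>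

definition box_set :: "real \<Rightarrow> (real^'n^'m) set" where
  "box_set R = {A. \<forall>i j. \<bar>A $ i $ j\<bar> \<le> R}"

definition avg_mat :: "real^'m^'m" where
  "avg_mat = (\<chi> i j. 1 / real CARD('m))"

end

theory Submission
  imports Defs
begin

definition clipv :: "real \<Rightarrow> real \<Rightarrow> real" where
  "clipv R t = max (-R) (min R t)"

lemma clipv_lip: "\<bar>clipv R a - clipv R b\<bar> \<le> \<bar>a - b\<bar>"
  unfolding clipv_def by auto

lemma clipv_best: "R > 0 \<Longrightarrow> \<bar>z\<bar> \<le> R \<Longrightarrow> (a - clipv R a)^2 \<le> (a - z)^2"
proof -
  assume "R > 0" "\<bar>z\<bar> \<le> R"
  then have "\<bar>a - clipv R a\<bar> \<le> \<bar>a - z\<bar>" unfolding clipv_def by (simp add: abs_le_iff) linarith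
  then show ?thesis by (simp add: abs_le_square_iff)
qed

lemma norm_sq_mat: "(norm (A :: real^'n^'m))^2 = (\<Sum>i\<in>UNIV. \<Sum>j\<in>UNIV. (A$i$j)^2)"
proof -
  have r: "(norm (A$i))^2 = (\<Sum>j\<in>UNIV. (A$i$j)^2)" for i
    unfolding norm_vec_def L2_set_def by (simp add: sum_nonneg)
  show ?thesis unfolding norm_vec_def[of A] L2_set_def
    by (simp add: sum_nonneg r)
qed

lemma box_convex: "convex (box_set R)"
  unfolding convex_def box_set_def
proof (clarsimp)
  fix x y :: "real^'n^'m" and u v :: real and i j
  assume h: "\<forall>i j. \<bar>x $ i $ j\<bar> \<le> R" "\<forall>i j. \<bar>y $ i $ j\<bar> \<le> R" "0 \<le> u" "0 \<le> v" "u + v = 1"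
  have "\<bar>u * x$i$j + v * y$i$j\<bar> \<le> u * \<bar>x$i$j\<bar> + v * \<bar>y$i$j\<bar>"
    using h by (simp add: abs_triangle_ineq[THEN order_trans] abs_mult)
  also have "\<dots> \<le> u * R + v * R" using h by (intro add_mono mult_left_mono) auto
  finally show "\<bar>u * x$i$j + v * y$i$j\<bar> \<le> R" using h by (simp add: distrib_right[symmetric])
qed

lemma box_closed: "closed (box_set R :: (real^'n^'m) set)"
proof -
  have "box_set R = (\<Inter>i. \<Inter>j. {A :: real^'n^'m. \<bar>A$i$j\<bar> \<le> R})"
    unfolding box_set_def by auto
  moreover have "closed {A :: real^'n^'m. \<bar>A$i$j\<bar> \<le> R}" for i j
    by (intro closed_Collect_le continuous_intros)
  ultimately show ?thesis by (simp add: closed_INT)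
qed

lemma closest_box:
  fixes x :: "real^'n^'m"
  assumes "R > 0"
  shows "closest_point (box_set R) x = (\<chi> i j. clipv R (x$i$j))"
proof (rule closest_point_unique[symmetric, OF box_convex box_closed])
  have "\<bar>clipv R t\<bar> \<le> R" for t using assms unfolding clipv_def by linarith
  then show "(\<chi> i j. clipv R (x$i$j)) \<in> box_set R"
    unfolding box_set_def by simp
  show "\<forall>z\<in>box_set R. dist x (\<chi> i j. clipv R (x$i$j)) \<le> dist x z"
  proof
    fix z :: "real^'n^'m" assume z: "z \<in> box_set R"
    have zb: "\<bar>z$i$j\<bar> \<le> R" for i j using z unfolding box_set_def by blast
    have "(\<Sum>i\<in>UNIV. \<Sum>j\<in>UNIV. (x$i$j - clipv R (x$i$j))^2) \<le> (\<Sum>i\<in>UNIV. \<Sum>j\<in>UNIV. (x$i$j - z$i$j)^2)"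
      by (intro sum_mono clipv_best[OF assms zb])
    then have "(dist x (\<chi> i j. clipv R (x$i$j)))^2 \<le> (dist x z)^2"
      unfolding dist_norm norm_sq_mat by simp
    then show "dist x (\<chi> i j. clipv R (x$i$j)) \<le> dist x z"
      by (rule power2_le_imp_le) simp_all
  qed
qed

lemma avg_entry:
  "((mat 1 - (avg_mat :: real^'m^'m)) ** (y :: real^'n^'m)) $ i $ j
     = y$i$j - (\<Sum>k\<in>UNIV. y$k$j) / real CARD('m)"
  by (simp add: matrix_matrix_mult_def avg_mat_def mat_def left_diff_distrib sum_subtractf
      if_distrib[of "\<lambda>a. a * b" for b] sum_divide_distrib cong: if_cong)

lemma var_identity:
  fixes f :: "'m::finite \<Rightarrow> real"
  shows "(\<Sum>i\<in>UNIV. (f i - (\<Sum>k\<in>UNIV. f k) / real CARD('m))^2)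
       = (\<Sum>i\<in>UNIV. \<Sum>k\<in>UNIV. (f i - f k)^2) / (2 * real CARD('m))"
proof -
  define m where "m = real CARD('m)"
  define S where "S = (\<Sum>k\<in>UNIV. f k)"
  define Q where "Q = (\<Sum>k\<in>UNIV. (f k)^2)"
  have m: "m > 0" unfolding m_def by simp
  have "(\<Sum>i\<in>UNIV. (f i - S / m)^2) = (\<Sum>i\<in>UNIV. (f i)^2 - 2 * (S/m) * f i + (S/m)^2)"
    by (simp add: power2_diff algebra_simps)
  also have "\<dots> = Q - 2 * (S/m) * S + m * (S/m)^2"
    by (simp add: sum.distrib sum_subtractf sum_distrib_left[symmetric] sum_divide_distrib[symmetric] Q_def S_def[symmetric] m_def)
  also have "\<dots> = Q - S^2 / m" using m by (simp add: field_simps power2_eq_square)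
  finally have l: "(\<Sum>i\<in>UNIV. (f i - S / m)^2) = Q - S^2 / m" .
  have "(\<Sum>i\<in>UNIV. \<Sum>k\<in>UNIV. (f i - f k)^2) = (\<Sum>i\<in>UNIV. m * (f i)^2 - 2 * f i * S + Q)"
    unfolding power2_diff Q_def S_def m_def
    by (simp add: sum.distrib sum_subtractf sum_distrib_left sum_distrib_right)
  also have "\<dots> = m * Q - (\<Sum>i\<in>UNIV. f i) * (2 * S) + m * Q"
    by (simp add: sum.distrib sum_subtractf sum_distrib_left[symmetric] sum_distrib_right[symmetric] Q_def m_def mult.assoc mult.left_commute[of 2])
  also have "\<dots> = 2 * m * Q - 2 * S^2"
    by (simp add: S_def[symmetric] power2_eq_square)
  finally have r: "(\<Sum>i\<in>UNIV. \<Sum>k\<in>UNIV. (f i - f k)^2) = 2 * m * Q - 2 * S^2" .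
  show ?thesis unfolding S_def[symmetric] m_def[symmetric] l r using m
    by (simp add: field_simps power2_eq_square)
qed

theorem lemma3p1:
  fixes R :: real and x :: "real^'n^'m"
  assumes "R > 0"
  shows "norm ((mat 1 - (avg_mat :: real^'m^'m)) ** closest_point (box_set R) x)
         \<le> norm ((mat 1 - (avg_mat :: real^'m^'m)) ** x)"
proof -
  define c :: "real^'n^'m" where "c = (\<chi> i j. clipv R (x$i$j))"
  have cp: "closest_point (box_set R) x = c" unfolding c_def using closest_box[OF assms] .
  have key: "\<And>y :: real^'n^'m. (norm ((mat 1 - (avg_mat :: real^'m^'m)) ** y))^2
     = (\<Sum>j\<in>UNIV. (\<Sum>i\<in>UNIV. \<Sum>k\<in>UNIV. (y$i$j - y$k$j)^2) / (2 * real CARD('m)))"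
    unfolding norm_sq_mat avg_entry
    by (subst sum.swap) (simp add: var_identity)
  have "(norm ((mat 1 - (avg_mat :: real^'m^'m)) ** c))^2 \<le> (norm ((mat 1 - (avg_mat :: real^'m^'m)) ** x))^2"
    unfolding key
  proof (intro sum_mono divide_right_mono)
    fix j i k
    show "(c$i$j - c$k$j)^2 \<le> (x$i$j - x$k$j)^2"
      unfolding c_def using clipv_lip[of R "x$i$j" "x$k$j"]
      by (simp add: abs_le_square_iff)
  qed simp
  then show ?thesis unfolding cp by (rule power2_le_imp_le) simp_all
qed

end
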